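(* Let $p\ge 3$ be a prime. Then there exists a set of $p-1$ mutually orthogonal binary frequency squares of order $2p$.
   Context: A binary frequency square of order $n$ (with $n$ even) is an $n\times n$ array with entries in $\{0,1\}$ such that each of $0$ and $1$ appears exactly $n/2$ times in each row and in each column. Two such squares are orthogonal if, when superimposed, each of the four ordered pairs $(0,0),(0,1),(1,0),(1,1)$ appears the same number of times (namely $n^2/4$). A set of frequency squares is mutually orthogonal if every pair of distinct members is orthogonal. *)

theory Defs
  imports Main "HOL-Computational_Algebra.Primes"
begin

text \<open>An n x n array is modelled as a function nat => nat => nat, of which only
  the entries L i j with i, j < n matter.\<close>

definition binary_freq_square :: "nat \<Rightarrow> (nat \<Rightarrow> nat \<Rightarrow> nat) \<Rightarrow> bool" where
  "binary_freq_square n L \<longleftrightarrow> even n \<and>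
     (\<forall>i<n. \<forall>j<n. L i j \<in> {0, 1}) \<and>
     (\<forall>i<n. \<forall>s\<in>{0::nat, 1}. card {j. j < n \<and> L i j = s} = n div 2) \<and>
     (\<forall>j<n. \<forall>s\<in>{0::nat, 1}. card {i. i < n \<and> L i j = s} = n div 2)"

definition orthogonal_squares :: "nat \<Rightarrow> (nat \<Rightarrow> nat \<Rightarrow> nat) \<Rightarrow> (nat \<Rightarrow> nat \<Rightarrow> nat) \<Rightarrow> bool" where
  "orthogonal_squares n L M \<longleftrightarrow>
     (\<forall>a\<in>{0::nat, 1}. \<forall>b\<in>{0::nat, 1}.
        card {(i, j). i < n \<and> j < n \<and> L i j = a \<and> M i j = b} = n\<^sup>2 div 4)"

definition MOFS_binary :: "nat \<Rightarrow> nat \<Rightarrow> (nat \<Rightarrow> nat \<Rightarrow> nat \<Rightarrow> nat) \<Rightarrow> bool" where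
  "MOFS_binary n k F \<longleftrightarrow>
     (\<forall>r<k. binary_freq_square n (F r)) \<and>
     (\<forall>r<k. \<forall>s<k. r \<noteq> s \<longrightarrow>
        (\<exists>i<n. \<exists>j<n. F r i j \<noteq> F s i j) \<and> orthogonal_squares n (F r) (F s))"

end

theory Submission
  imports Defs "HOL-Number_Theory.Cong"
begin

definition ind :: "bool \<Rightarrow> nat" where "ind b = (if b then 1 else 0)"

definition Gs :: "nat \<Rightarrow> (nat \<times> nat) set" where "Gs p = {0..<2} \<times> {0..<p}"

definition gadd :: "nat \<Rightarrow> nat \<times> nat \<Rightarrow> nat \<times> nat \<Rightarrow> nat \<times> nat" where
  "gadd p g h = ((fst g + fst h) mod 2, (snd g + snd h) mod p)"

definition gsub :: "nat \<Rightarrow> nat \<times> nat \<Rightarrow> nat \<times> nat \<Rightarrow> nat \<times> nat" where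
  "gsub p g h = ((fst g + fst h) mod 2, (snd g + (p - snd h)) mod p)"

definition inS :: "nat \<Rightarrow> nat \<times> nat \<Rightarrow> nat" where
  "inS p g = (if fst g = 0 then ind (snd g \<le> p div 2) else ind (1 \<le> snd g \<and> snd g \<le> p div 2))"

definition rho :: "nat \<Rightarrow> nat \<times> nat \<Rightarrow> nat" where
  "rho p e = (\<Sum>u\<in>Gs p. inS p u * inS p (gadd p u e))"

lemma finite_Gs[simp]: "finite (Gs p)" by (simp add: Gs_def)

lemma gadd_in: "p > 0 \<Longrightarrow> gadd p g h \<in> Gs p"
  by (simp add: gadd_def Gs_def)

lemma gsub_in: "p > 0 \<Longrightarrow> gsub p g h \<in> Gs p"
  by (simp add: gsub_def Gs_def)

lemma gadd_inj: assumes "p > 0" "h1 \<in> Gs p" "h2 \<in> Gs p" "gadd p c h1 = gadd p c h2" shows "h1 = h2"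
proof -
  obtain a1 x1 where h1: "h1 = (a1,x1)" by force
  obtain a2 x2 where h2: "h2 = (a2,x2)" by force
  have r: "a1 < 2" "a2 < 2" "x1 < p" "x2 < p" using assms(2,3) h1 h2 by (auto simp: Gs_def)
  have e1: "(fst c + a1) mod 2 = (fst c + a2) mod 2" and e2: "(snd c + x1) mod p = (snd c + x2) mod p"
    using assms(4) h1 h2 by (auto simp: gadd_def)
  from e1 r have "a1 = a2" by presburger
  moreover from e2 have "[snd c + x1 = snd c + x2] (mod p)" by (simp add: cong_def)
  then have "[x1 = x2] (mod p)" by (simp add: cong_add_lcancel_nat)
  then have "x1 = x2" using r by (simp add: cong_def)
  ultimately show ?thesis using h1 h2 by simp
qed

lemma gadd_bij: assumes "p > 0" shows "bij_betw (gadd p c) (Gs p) (Gs p)"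
proof -
  have inj: "inj_on (gadd p c) (Gs p)" using gadd_inj[OF assms] by (auto simp: inj_on_def)
  have "gadd p c ` Gs p \<subseteq> Gs p" using gadd_in[OF assms] by blast
  then have "gadd p c ` Gs p = Gs p" using endo_inj_surj[OF finite_Gs _ inj] by simp
  then show ?thesis using inj by (simp add: bij_betw_def)
qed

lemma sum_transl: assumes "p > 0" shows "(\<Sum>h\<in>Gs p. f (gadd p c h)) = (\<Sum>h\<in>Gs p. f h)"
  using sum.reindex_bij_betw[OF gadd_bij[OF assms]] .

lemma sum_Gs: "(\<Sum>g\<in>Gs p. f g) = (\<Sum>x<p. f (0,x)) + (\<Sum>x<p. f (1,x))"
proof -
  have "(\<Sum>g\<in>Gs p. f g) = (\<Sum>a\<in>{0..<2}. \<Sum>x\<in>{0..<p}. f (a,x))"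
    unfolding Gs_def by (simp add: sum.cartesian_product)
  also have "\<dots> = (\<Sum>x<p. f (0,x)) + (\<Sum>x<p. f (1,x))"
    by (simp add: numeral_2_eq_2 atLeast0LessThan)
  finally show ?thesis .
qed

lemma sum_ind: "(\<Sum>x\<in>A. ind (P x)) = card {x\<in>A. P x}" if "finite A"
proof -
  have "(\<Sum>x\<in>A. ind (P x)) = (\<Sum>x\<in>A. if P x then 1 else 0)" by (simp add: ind_def)
  also have "\<dots> = (\<Sum>x\<in>{x\<in>A. P x}. 1)" using that by (simp add: sum.inter_filter[symmetric])
  finally show ?thesis by simp
qed

lemma sum_inS: assumes "odd p" shows "(\<Sum>h\<in>Gs p. inS p h) = p"
proof -
  have pd: "p div 2 < p" using assms by presburger
  have a: "(\<Sum>x<p. inS p (0,x)) = p div 2 + 1"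
  proof -
    have "(\<Sum>x<p. inS p (0,x)) = (\<Sum>x<p. ind (x \<le> p div 2))" by (simp add: inS_def)
    also have "\<dots> = card {x\<in>{..<p}. x \<le> p div 2}" by (rule sum_ind) simp
    also have "{x\<in>{..<p}. x \<le> p div 2} = {..p div 2}" using pd by auto
    finally show ?thesis by simp
  qed
  have b: "(\<Sum>x<p. inS p (1,x)) = p div 2"
  proof -
    have "(\<Sum>x<p. inS p (1,x)) = (\<Sum>x<p. ind (1 \<le> x \<and> x \<le> p div 2))" by (simp add: inS_def)
    also have "\<dots> = card {x\<in>{..<p}. 1 \<le> x \<and> x \<le> p div 2}" by (rule sum_ind) simp
    also have "{x\<in>{..<p}. 1 \<le> x \<and> x \<le> p div 2} = {1..p div 2}" using pd by auto
    finally show ?thesis by simp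
  qed
  show ?thesis using a b assms by (simp add: sum_Gs) presburger
qed

lemma gadd_gsub: assumes "snd c1 \<le> p" shows "gadd p c2 h = gadd p (gadd p c1 h) (gsub p c2 c1)"
proof -
  have "((fst c1 + fst h) mod 2 + (fst c2 + fst c1) mod 2) mod 2 = (fst c1 + fst h + (fst c2 + fst c1)) mod 2"
    by (simp add: mod_add_eq)
  also have "fst c1 + fst h + (fst c2 + fst c1) = (fst c2 + fst h) + 2 * fst c1" by simp
  finally have 1: "(fst c2 + fst h) mod 2 = ((fst c1 + fst h) mod 2 + (fst c2 + fst c1) mod 2) mod 2"
    by simp
  have "((snd c1 + snd h) mod p + (snd c2 + (p - snd c1)) mod p) mod p
        = (snd c1 + snd h + (snd c2 + (p - snd c1))) mod p" by (simp add: mod_add_eq)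
  also have "snd c1 + snd h + (snd c2 + (p - snd c1)) = (snd c2 + snd h) + p" using assms by simp
  finally have 2: "((snd c1 + snd h) mod p + (snd c2 + (p - snd c1)) mod p) mod p = (snd c2 + snd h) mod p"
    by simp
  show ?thesis using 1 2 by (simp add: gadd_def gsub_def)
qed

lemma pair_sum: assumes "p > 0" "c1 \<in> Gs p"
  shows "(\<Sum>h\<in>Gs p. inS p (gadd p c1 h) * inS p (gadd p c2 h)) = rho p (gsub p c2 c1)"
proof -
  have le: "snd c1 \<le> p" using assms(2) by (auto simp: Gs_def)
  have "(\<Sum>h\<in>Gs p. inS p (gadd p c1 h) * inS p (gadd p c2 h))
      = (\<Sum>h\<in>Gs p. (\<lambda>u. inS p u * inS p (gadd p u (gsub p c2 c1))) (gadd p c1 h))"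
    using gadd_gsub[OF le, of c2] by simp
  also have "\<dots> = (\<Sum>u\<in>Gs p. inS p u * inS p (gadd p u (gsub p c2 c1)))"
    by (rule sum_transl[OF assms(1)])
  finally show ?thesis by (simp add: rho_def)
qed

lemma sum_rho: assumes "odd p" shows "(\<Sum>e\<in>Gs p. rho p e) = p * p"
proof -
  have p0: "p > 0" using assms by presburger
  have "(\<Sum>e\<in>Gs p. rho p e) = (\<Sum>u\<in>Gs p. \<Sum>e\<in>Gs p. inS p u * inS p (gadd p u e))"
    unfolding rho_def by (rule sum.swap)
  also have "\<dots> = (\<Sum>u\<in>Gs p. inS p u * (\<Sum>e\<in>Gs p. inS p (gadd p u e)))"
    by (simp add: sum_distrib_left)
  also have "\<dots> = (\<Sum>u\<in>Gs p. inS p u * p)"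
    using sum_transl[OF p0, of "inS p"] sum_inS[OF assms] by simp
  also have "\<dots> = p * p" using sum_inS[OF assms] by (simp add: sum_distrib_right[symmetric])
  finally show ?thesis .
qed

lemma inS_0_1: "inS p (0,y) = inS p (1,y) + ind (y = 0)"
  by (simp add: inS_def ind_def)

lemma rho_sym: assumes "0 < d" "d < p" shows "rho p (1,d) = rho p (0,d)"
proof -
  define y where "y x = (x + d) mod p" for x
  have r0: "rho p (0,d) = (\<Sum>x<p. inS p (0,x) * inS p (0, y x) + inS p (1,x) * inS p (1, y x))"
    unfolding rho_def sum_Gs by (simp add: gadd_def y_def sum.distrib)
  have r1: "rho p (1,d) = (\<Sum>x<p. inS p (0,x) * inS p (1, y x) + inS p (1,x) * inS p (0, y x))"
    unfolding rho_def sum_Gs by (simp add: gadd_def y_def sum.distrib)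
  have pt: "inS p (0,x) * inS p (0, y x) + inS p (1,x) * inS p (1, y x)
       = inS p (0,x) * inS p (1, y x) + inS p (1,x) * inS p (0, y x) + ind (x = 0) * ind (y x = 0)" for x
    unfolding inS_0_1 by (simp add: algebra_simps)
  have z: "ind (x = 0) * ind (y x = 0) = 0" if "x < p" for x
    using assms by (auto simp: ind_def y_def)
  show ?thesis unfolding r0 r1 pt using z by (simp add: sum.distrib)
qed

definition tau :: "nat \<Rightarrow> nat \<Rightarrow> nat \<Rightarrow> nat" where
  "tau p k y = ind (\<exists>l'<p. k < l' \<and> (k * l' + y) mod p = 0)"

definition Yk :: "nat \<Rightarrow> nat \<Rightarrow> nat \<Rightarrow> nat \<Rightarrow> nat" where
  "Yk p k a x = (k * x + a * k * k) mod p"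

definition pim :: "nat \<Rightarrow> nat \<Rightarrow> nat \<times> nat \<Rightarrow> nat \<times> nat" where
  "pim p k g = ((fst g + tau p k (Yk p k (fst g) (snd g))) mod 2, Yk p k (fst g) (snd g))"

lemma int_dvd_small: assumes "(p::int) dvd a" "\<bar>a\<bar> < p" shows "a = 0"
proof (rule ccontr)
  assume "a \<noteq> 0"
  then have "\<bar>p\<bar> \<le> \<bar>a\<bar>" using dvd_imp_le_int assms(1) by blast
  then show False using assms(2) abs_ge_self[of p] by linarith
qed

lemma prime_lin:
  assumes "prime p" "k < p" "l < p" "k \<noteq> l" "int p dvd (int l - int k) * t"
  shows "int p dvd t"
proof -
  have pr: "prime (int p)" using assms(1) by (simp add: prime_nat_int_transfer)
  have "\<not> int p dvd (int l - int k)"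
  proof
    assume "int p dvd (int l - int k)"
    moreover have "\<bar>int l - int k\<bar> < int p" using assms(2,3) by linarith
    ultimately have "int l - int k = 0" by (rule int_dvd_small)
    then show False using assms(4) by simp
  qed
  then show ?thesis using assms(5) prime_dvd_mult_iff[OF pr] by blast
qed

lemma mod_eq_int: "((a::nat) mod p = b mod p) \<longleftrightarrow> int p dvd int a - int b"
proof -
  have "(a mod p = b mod p) \<longleftrightarrow> (int (a mod p) = int (b mod p))" by (rule of_nat_eq_iff[symmetric])
  also have "\<dots> \<longleftrightarrow> (int a mod int p = int b mod int p)" by (simp add: of_nat_mod)
  also have "\<dots> \<longleftrightarrow> int p dvd int a - int b" by (rule mod_eq_dvd_iff)
  finally show ?thesis .
qed

lemma cancel_k:
  fixes p k x1 x2 c :: nat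
  assumes "prime p" "0 < k" "k < p" "x1 < p" "x2 < p" "(k * x1 + c) mod p = (k * x2 + c) mod p"
  shows "x1 = x2"
proof -
  have eq: "int (k * x1 + c) - int (k * x2 + c) = (int k - int 0) * (int x1 - int x2)"
    by (simp add: algebra_simps)
  have "int p dvd (int k - int 0) * (int x1 - int x2)"
    using assms(6) unfolding mod_eq_int eq .
  then have "int p dvd (int x1 - int x2)"
    using prime_lin[of p 0 k "int x1 - int x2", OF assms(1) _ assms(3)] assms(2,3) by simp
  moreover have "\<bar>int x1 - int x2\<bar> < int p" using assms(4,5) by linarith
  ultimately have "int x1 - int x2 = 0" by (rule int_dvd_small)
  then show ?thesis by simp
qed

lemma tau_le: "tau p k y < 2" by (simp add: tau_def ind_def)

lemma pim_in: "p > 0 \<Longrightarrow> pim p k g \<in> Gs p"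
  by (simp add: pim_def Gs_def Yk_def)

lemma pim_bij: assumes "prime p" "0 < k" "k < p" shows "bij_betw (pim p k) (Gs p) (Gs p)"
proof -
  have p0: "p > 0" using assms(2,3) by simp
  have inj: "inj_on (pim p k) (Gs p)"
  proof (rule inj_onI)
    fix g h assume g: "g \<in> Gs p" and h: "h \<in> Gs p" and e: "pim p k g = pim p k h"
    obtain a1 x1 where g': "g = (a1,x1)" by force
    obtain a2 x2 where h': "h = (a2,x2)" by force
    have r: "a1 < 2" "a2 < 2" "x1 < p" "x2 < p" using g h g' h' by (auto simp: Gs_def)
    have eY: "Yk p k a1 x1 = Yk p k a2 x2" using e g' h' by (simp add: pim_def)
    have ea: "(a1 + tau p k (Yk p k a1 x1)) mod 2 = (a2 + tau p k (Yk p k a1 x1)) mod 2"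
      using e g' h' eY by (simp add: pim_def)
    have "[a1 + tau p k (Yk p k a1 x1) = a2 + tau p k (Yk p k a1 x1)] (mod 2)" using ea by (simp add: cong_def)
    then have "[a1 = a2] (mod 2)" by (simp add: cong_add_rcancel_nat)
    then have "a1 = a2" using r by (simp add: cong_def)
    then have "(k * x1 + a1 * k * k) mod p = (k * x2 + a1 * k * k) mod p" using eY by (simp add: Yk_def)
    then have "x1 = x2" using cancel_k[OF assms r(3,4)] by blast
    then show "g = h" using g' h' \<open>a1 = a2\<close> by simp
  qed
  have "pim p k ` Gs p \<subseteq> Gs p" using pim_in[OF p0] by blast
  then have "pim p k ` Gs p = Gs p" using endo_inj_surj[OF finite_Gs _ inj] by simp
  then show ?thesis using inj by (simp add: bij_betw_def)
qed

definition Dm :: "nat \<Rightarrow> nat \<Rightarrow> nat \<Rightarrow> nat \<times> nat \<Rightarrow> nat \<times> nat" where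
  "Dm p k l g = gsub p (pim p l g) (pim p k g)"

lemma Dm_in: "p > 0 \<Longrightarrow> Dm p k l g \<in> Gs p" by (simp add: Dm_def gsub_in)

lemma snd_Dm: "snd (Dm p k l (a,x)) = (Yk p l a x + (p - Yk p k a x)) mod p"
  by (simp add: Dm_def gsub_def pim_def)

lemma fst_Dm: "fst (Dm p k l (a,x)) = ((a + tau p l (Yk p l a x)) mod 2 + (a + tau p k (Yk p k a x)) mod 2) mod 2"
  by (simp add: Dm_def gsub_def pim_def)

lemma Yk_lt: "p > 0 \<Longrightarrow> Yk p k a x < p" by (simp add: Yk_def)

lemma z_int:
  assumes "p > 0"
  shows "int ((Yk p l a x + (p - Yk p k a x)) mod p)
         = ((int l - int k) * (int x + int a * (int l + int k))) mod int p"
proof -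
  have le: "Yk p k a x \<le> p" using Yk_lt[OF assms] less_imp_le by blast
  have "int ((Yk p l a x + (p - Yk p k a x)) mod p) = (int (Yk p l a x) + int p - int (Yk p k a x)) mod int p"
    using le by (simp add: of_nat_mod of_nat_diff)
  also have "\<dots> = (int (Yk p l a x) - int (Yk p k a x)) mod int p"
    by (metis add.commute add_diff_eq mod_add_self1)
  also have "\<dots> = (int (l * x + a * l * l) mod int p - int (k * x + a * k * k) mod int p) mod int p"
    by (simp add: Yk_def of_nat_mod)
  also have "\<dots> = (int (l * x + a * l * l) - int (k * x + a * k * k)) mod int p"
    by (rule mod_diff_eq)
  also have "int (l * x + a * l * l) - int (k * x + a * k * k) = (int l - int k) * (int x + int a * (int l + int k))"
    by (simp add: algebra_simps)
  finally show ?thesis .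
qed

definition zf :: "nat \<Rightarrow> nat \<Rightarrow> nat \<Rightarrow> nat \<Rightarrow> nat \<Rightarrow> nat" where
  "zf p k l a x = (Yk p l a x + (p - Yk p k a x)) mod p"

lemma zf_zero_iff:
  assumes "prime p" "k < p" "l < p" "k \<noteq> l"
  shows "zf p k l a x = 0 \<longleftrightarrow> int p dvd (int x + int a * (int l + int k))"
proof -
  have p0: "p > 0" using assms(2) by simp
  have "zf p k l a x = 0 \<longleftrightarrow> int (zf p k l a x) = 0" by simp
  also have "\<dots> \<longleftrightarrow> ((int l - int k) * (int x + int a * (int l + int k))) mod int p = 0"
    unfolding zf_def z_int[OF p0] ..
  also have "\<dots> \<longleftrightarrow> int p dvd (int l - int k) * (int x + int a * (int l + int k))"
    by (rule dvd_eq_mod_eq_0[symmetric])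
  also have "\<dots> \<longleftrightarrow> int p dvd (int x + int a * (int l + int k))"
  proof
    assume "int p dvd (int l - int k) * (int x + int a * (int l + int k))"
    then show "int p dvd (int x + int a * (int l + int k))" by (rule prime_lin[OF assms])
  next
    assume "int p dvd (int x + int a * (int l + int k))"
    then show "int p dvd (int l - int k) * (int x + int a * (int l + int k))" by (rule dvd_mult)
  qed
  finally show ?thesis .
qed

lemma zf_inj:
  assumes "prime p" "k < p" "l < p" "k \<noteq> l" "x1 < p" "x2 < p" "zf p k l a x1 = zf p k l a x2"
  shows "x1 = x2"
proof -
  have p0: "p > 0" using assms(2) by simp
  have "int (zf p k l a x1) = int (zf p k l a x2)" using assms(7) by simp
  then have "((int l - int k) * (int x1 + int a * (int l + int k))) mod int p
           = ((int l - int k) * (int x2 + int a * (int l + int k))) mod int p"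
    unfolding zf_def z_int[OF p0] .
  then have "int p dvd (int l - int k) * (int x1 + int a * (int l + int k)) - (int l - int k) * (int x2 + int a * (int l + int k))"
    by (simp add: mod_eq_dvd_iff)
  also have "(int l - int k) * (int x1 + int a * (int l + int k)) - (int l - int k) * (int x2 + int a * (int l + int k))
      = (int l - int k) * (int x1 - int x2)" by (simp add: algebra_simps)
  finally have "int p dvd (int x1 - int x2)" using prime_lin[OF assms(1-4)] by blast
  moreover have "\<bar>int x1 - int x2\<bar> < int p" using assms(5,6) by linarith
  ultimately have "int x1 - int x2 = 0" by (rule int_dvd_small)
  then show ?thesis by simp
qed

lemma zf_bij:
  assumes "prime p" "k < p" "l < p" "k \<noteq> l"
  shows "bij_betw (zf p k l a) {..<p} {..<p}"
proof -
  have p0: "p > 0" using assms(2) by simp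
  have inj: "inj_on (zf p k l a) {..<p}" using zf_inj[OF assms] by (auto simp: inj_on_def)
  have "zf p k l a ` {..<p} \<subseteq> {..<p}" using p0 by (auto simp: zf_def)
  then have "zf p k l a ` {..<p} = {..<p}" using endo_inj_surj[OF finite_lessThan _ inj] by simp
  then show ?thesis using inj by (simp add: bij_betw_def)
qed

lemma sum_D:
  assumes z: "bij_betw z {..<p} {..<p}" and D: "\<And>x. x < p \<Longrightarrow> D x \<in> Gs p \<and> snd (D x) = z x"
    and x0: "x0 < p" "z x0 = 0" and p0: "p > 0"
  shows "(\<Sum>x<p. rho p (D x)) + rho p (0,0) = (\<Sum>d<p. rho p (0,d)) + rho p (D x0)"
proof -
  have eq: "rho p (D x) = rho p (0, z x)" if xp: "x < p" and xne: "x \<noteq> x0" for x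
  proof -
    have "z x \<noteq> 0"
    proof
      assume "z x = 0"
      then have "z x = z x0" using x0 by simp
      then show False using z xp xne x0 by (auto simp: bij_betw_def inj_on_def)
    qed
    moreover have zl: "z x < p" using z xp by (auto simp: bij_betw_def)
    moreover obtain a where a: "D x = (a, z x)" "a < 2" using D[OF xp] by (cases "D x") (auto simp: Gs_def)
    ultimately show ?thesis
    proof (cases "a = 0")
      case True then show ?thesis using a by simp
    next
      case False then have "a = 1" using a by simp
      then show ?thesis using a rho_sym[of "z x" p] \<open>z x \<noteq> 0\<close> zl by simp
    qed
  qed
  have s1: "(\<Sum>x<p. rho p (D x)) = rho p (D x0) + (\<Sum>x\<in>{..<p} - {x0}. rho p (D x))"
    using x0 by (simp add: sum.remove)
  have s2: "(\<Sum>x<p. rho p (0, z x)) = rho p (0, z x0) + (\<Sum>x\<in>{..<p} - {x0}. rho p (0, z x))"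
    using x0 by (simp add: sum.remove)
  have s3: "(\<Sum>x\<in>{..<p} - {x0}. rho p (D x)) = (\<Sum>x\<in>{..<p} - {x0}. rho p (0, z x))"
    using eq by (intro sum.cong) auto
  have s4: "(\<Sum>x<p. rho p (0, z x)) = (\<Sum>d<p. rho p (0,d))"
    using sum.reindex_bij_betw[OF z, of "\<lambda>d. rho p (0,d)"] by simp
  show ?thesis using s1 s2 s3 s4 x0 by simp
qed

lemma tau0: assumes "prime p" "0 < k" "k < p" shows "tau p k 0 = 0"
proof -
  have "\<not> (\<exists>l'<p. k < l' \<and> (k * l' + 0) mod p = 0)"
  proof
    assume "\<exists>l'<p. k < l' \<and> (k * l' + 0) mod p = 0"
    then obtain l' where l': "l' < p" "k < l'" "(k * l') mod p = 0" by auto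
    then have "p dvd k * l'" by (simp add: dvd_eq_mod_eq_0)
    then have "p dvd k \<or> p dvd l'" using prime_dvd_mult_iff[OF assms(1)] by blast
    then show False using l' assms(2,3) by (auto dest: dvd_imp_le)
  qed
  then show ?thesis by (simp add: tau_def ind_def)
qed

lemma pim00: assumes "prime p" "0 < k" "k < p" shows "pim p k (0,0) = (0,0)"
proof -
  have "Yk p k 0 0 = 0" by (simp add: Yk_def)
  then show ?thesis using tau0[OF assms] by (simp add: pim_def)
qed

lemma D0: assumes "prime p" "0 < k" "k < p" "0 < l" "l < p" shows "Dm p k l (0,0) = (0,0)"
  unfolding Dm_def pim00[OF assms(1-3)] pim00[OF assms(1,4,5)] by (simp add: gsub_def)

lemma tau_at:
  assumes "prime p" "0 < k" "k < p" "l < p" "(k * l + Y) mod p = 0"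
  shows "tau p k Y = ind (k < l)"
proof -
  have "(\<exists>l'<p. k < l' \<and> (k * l' + Y) mod p = 0) \<longleftrightarrow> k < l"
  proof
    assume "\<exists>l'<p. k < l' \<and> (k * l' + Y) mod p = 0"
    then obtain l' where l': "l' < p" "k < l'" "(k * l' + Y) mod p = 0" by auto
    then have "(k * l' + Y) mod p = (k * l + Y) mod p" using assms(5) by simp
    then have "l' = l" using cancel_k[OF assms(1-3) l'(1) assms(4)] by blast
    then show "k < l" using l' by simp
  next
    assume "k < l" then show "\<exists>l'<p. k < l' \<and> (k * l' + Y) mod p = 0"
      using assms(4,5) by (intro exI[of _ l]) simp
  qed
  then show ?thesis by (simp add: tau_def)
qed

lemma D1:
  assumes "prime p" "0 < k" "k < p" "0 < l" "l < p" "k \<noteq> l" "zf p k l 1 x = 0"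
  shows "Dm p k l (1,x) = (1,0)"
proof -
  have p0: "p > 0" using assms(3) by simp
  have "int p dvd (int x + int 1 * (int l + int k))" using assms(7) zf_zero_iff[OF assms(1,3,5,6)] by blast
  then have "int p dvd int (x + l + k)" by (simp add: add.assoc)
  then have dv: "p dvd (x + l + k)" by (simp only: int_dvd_int_iff)
  have "int p dvd int (l * x + 1 * l * l) - int (k * x + 1 * k * k)"
  proof -
    have "int (l * x + 1 * l * l) - int (k * x + 1 * k * k) = (int l - int k) * int (x + l + k)"
      by (simp add: algebra_simps)
    then show ?thesis using \<open>int p dvd int (x + l + k)\<close> by simp
  qed
  then have YY: "Yk p l 1 x = Yk p k 1 x" unfolding Yk_def mod_eq_int[symmetric] .
  define Y where "Y = Yk p k 1 x"
  have kz: "(k * l + Y) mod p = 0"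
  proof -
    have "(k * l + Y) mod p = (k * l + (k * x + 1 * k * k)) mod p" by (simp add: Y_def Yk_def mod_add_right_eq)
    also have "k * l + (k * x + 1 * k * k) = k * (x + l + k)" by (simp add: algebra_simps)
    finally show ?thesis using dv by (simp add: dvd_eq_mod_eq_0[symmetric])
  qed
  have lz: "(l * k + Y) mod p = 0" using kz by (simp add: mult.commute)
  have tk: "tau p k Y = ind (k < l)" by (rule tau_at[OF assms(1-3) assms(5) kz])
  have tl: "tau p l Y = ind (l < k)" by (rule tau_at[OF assms(1,4,5) assms(3) lz])
  have f: "fst (Dm p k l (1,x)) = 1"
    unfolding fst_Dm YY Y_def[symmetric] tk tl using assms(6) by (cases "k < l") (auto simp: ind_def)
  have s: "snd (Dm p k l (1,x)) = 0" using assms(7) by (simp add: snd_Dm zf_def)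
  show ?thesis using f s by (simp add: prod_eq_iff)
qed

lemma main_sum:
  assumes "prime p" "odd p" "0 < k" "k < p" "0 < l" "l < p" "k \<noteq> l"
  shows "(\<Sum>g\<in>Gs p. rho p (Dm p k l g)) = p * p"
proof -
  have p0: "p > 0" using assms(4) by simp
  have DD: "Dm p k l (a,x) \<in> Gs p \<and> snd (Dm p k l (a,x)) = zf p k l a x" for a x
    using Dm_in[OF p0] by (simp add: snd_Dm zf_def)
  have zb: "bij_betw (zf p k l a) {..<p} {..<p}" for a by (rule zf_bij[OF assms(1,4,6,7)])
  have z00: "zf p k l 0 0 = 0" using zf_zero_iff[OF assms(1,4,6,7), of 0 0] by simp
  have S0: "(\<Sum>x<p. rho p (Dm p k l (0,x))) + rho p (0,0) = (\<Sum>d<p. rho p (0,d)) + rho p (0,0)"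
    using sum_D[OF zb[of 0], of "\<lambda>x. Dm p k l (0,x)" 0] DD z00 p0 D0[OF assms(1,3,4,5,6)] by simp
  have "0 \<in> zf p k l 1 ` {..<p}" using zb[of 1] p0 by (simp add: bij_betw_def)
  then obtain x1 where x1: "x1 < p" "zf p k l 1 x1 = 0" by auto
  have S1: "(\<Sum>x<p. rho p (Dm p k l (1,x))) + rho p (0,0) = (\<Sum>d<p. rho p (0,d)) + rho p (1,0)"
    using sum_D[OF zb[of 1], of "\<lambda>x. Dm p k l (1,x)" x1] DD x1 p0 D1[OF assms(1,3,4,5,6,7) x1(2)] by simp
  have R: "(\<Sum>d<p. rho p (0,d)) + (\<Sum>d<p. rho p (1,d)) = p * p"
    using sum_rho[OF assms(2)] by (simp add: sum_Gs)
  have R1: "(\<Sum>d<p. rho p (1,d)) + rho p (0,0) = (\<Sum>d<p. rho p (0,d)) + rho p (1,0)"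
  proof -
    have a: "(\<Sum>d<p. rho p (1,d)) = rho p (1,0) + (\<Sum>d\<in>{..<p} - {0}. rho p (1,d))"
      using p0 by (simp add: sum.remove)
    have b: "(\<Sum>d<p. rho p (0,d)) = rho p (0,0) + (\<Sum>d\<in>{..<p} - {0}. rho p (0,d))"
      using p0 by (simp add: sum.remove)
    have c: "(\<Sum>d\<in>{..<p} - {0}. rho p (1,d)) = (\<Sum>d\<in>{..<p} - {0}. rho p (0,d))"
    proof (rule sum.cong[OF refl])
      fix d assume "d \<in> {..<p} - {0}"
      then show "rho p (1,d) = rho p (0,d)" by (intro rho_sym) auto
    qed
    show ?thesis using a b c by simp
  qed
  have "(\<Sum>g\<in>Gs p. rho p (Dm p k l g)) = (\<Sum>x<p. rho p (Dm p k l (0,x))) + (\<Sum>x<p. rho p (Dm p k l (1,x)))"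
    by (rule sum_Gs)
  then show ?thesis using S0 S1 R R1 by linarith
qed

definition enc :: "nat \<Rightarrow> nat \<Rightarrow> nat \<times> nat" where "enc p i = (i div p, i mod p)"

definition FF :: "nat \<Rightarrow> nat \<Rightarrow> nat \<Rightarrow> nat \<Rightarrow> nat" where
  "FF p r i j = inS p (gadd p (pim p (Suc r) (enc p i)) (enc p j))"

lemma enc_bij: assumes "p > 0" shows "bij_betw (enc p) {..<2*p} (Gs p)"
proof -
  have inj: "inj_on (enc p) {..<2*p}"
  proof (rule inj_onI)
    fix i j assume "enc p i = enc p j"
    then have "i div p = j div p" "i mod p = j mod p" by (auto simp: enc_def)
    then show "i = j" by (metis div_mult_mod_eq)
  qed
  have "enc p ` {..<2*p} = Gs p"
  proof
    show "enc p ` {..<2*p} \<subseteq> Gs p"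
    proof
      fix g assume "g \<in> enc p ` {..<2*p}"
      then obtain i where i: "i < 2*p" "g = enc p i" by auto
      have "i div p < 2" using i(1) assms by (simp add: div_less_iff_less_mult mult.commute)
      then show "g \<in> Gs p" using i assms by (simp add: enc_def Gs_def)
    qed
  next
    show "Gs p \<subseteq> enc p ` {..<2*p}"
    proof
      fix g assume g: "g \<in> Gs p"
      then obtain a x where ax: "g = (a,x)" "a < 2" "x < p" by (auto simp: Gs_def)
      have lt: "a * p + x < 2 * p"
      proof -
        have "a * p \<le> 1 * p" using ax(2) by (intro mult_right_mono) auto
        then show ?thesis using ax(3) by linarith
      qed
      have "enc p (a * p + x) = (a, x)" using ax(3) by (simp add: enc_def)
      then show "g \<in> enc p ` {..<2*p}" using lt ax(1) by (metis image_eqI lessThan_iff)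
    qed
  qed
  then show ?thesis using inj by (simp add: bij_betw_def)
qed

lemma sum_enc: assumes "p > 0" shows "(\<Sum>i<2*p. f (enc p i)) = (\<Sum>g\<in>Gs p. f g)"
  by (rule sum.reindex_bij_betw[OF enc_bij[OF assms]])

lemma inS_01: "inS p g \<in> {0,1}" by (simp add: inS_def ind_def)

lemma FF_01: "FF p r i j \<in> {0,1}" unfolding FF_def by (rule inS_01)

lemma card_01: assumes "finite A" "\<And>x. f x \<in> {0::nat,1}" shows "card {x\<in>A. f x = 1} = (\<Sum>x\<in>A. f x)"
proof -
  have "card {x\<in>A. f x = 1} = (\<Sum>x\<in>A. ind (f x = 1))" using sum_ind[OF assms(1)] by simp
  also have "\<dots> = (\<Sum>x\<in>A. f x)" using assms(2) by (intro sum.cong refl) (force simp: ind_def)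
  finally show ?thesis .
qed

lemma card_00: assumes "finite A" "\<And>x. f x \<in> {0::nat,1}"
  shows "card {x\<in>A. f x = 0} + card {x\<in>A. f x = 1} = card A"
proof -
  have "{x\<in>A. f x = 0} \<union> {x\<in>A. f x = 1} = A" using assms(2) by auto
  moreover have "{x\<in>A. f x = 0} \<inter> {x\<in>A. f x = 1} = {}" by auto
  ultimately show ?thesis using assms(1) by (metis (no_types, lifting) card_Un_disjoint finite_subset mem_Collect_eq subsetI)
qed

lemma gadd_comm: "gadd p g h = gadd p h g" by (simp add: gadd_def add.commute)

lemma row_sum: assumes "odd p" "g \<in> Gs p"
  shows "(\<Sum>j<2*p. inS p (gadd p g (enc p j))) = p"
proof -
  have p0: "p > 0" using assms(1) by presburger
  have "(\<Sum>j<2*p. inS p (gadd p g (enc p j))) = (\<Sum>h\<in>Gs p. inS p (gadd p g h))"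
    using sum_enc[OF p0, of "\<lambda>h. inS p (gadd p g h)"] .
  also have "\<dots> = p" using sum_transl[OF p0, of "inS p" g] sum_inS[OF assms(1)] by simp
  finally show ?thesis .
qed

lemma col_sum: assumes "prime p" "odd p" "0 < k" "k < p" "h \<in> Gs p"
  shows "(\<Sum>i<2*p. inS p (gadd p (pim p k (enc p i)) h)) = p"
proof -
  have p0: "p > 0" using assms(4) by simp
  have "(\<Sum>i<2*p. inS p (gadd p (pim p k (enc p i)) h)) = (\<Sum>g\<in>Gs p. inS p (gadd p (pim p k g) h))"
    using sum_enc[OF p0, of "\<lambda>g. inS p (gadd p (pim p k g) h)"] .
  also have "\<dots> = (\<Sum>g\<in>Gs p. inS p (gadd p g h))"
    using sum.reindex_bij_betw[OF pim_bij[OF assms(1,3,4)], of "\<lambda>g. inS p (gadd p g h)"] .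
  also have "\<dots> = (\<Sum>g\<in>Gs p. inS p (gadd p h g))" by (simp add: gadd_comm)
  also have "\<dots> = p" using sum_transl[OF p0, of "inS p" h] sum_inS[OF assms(2)] by simp
  finally show ?thesis .
qed

lemma enc_in: "p > 0 \<Longrightarrow> i < 2 * p \<Longrightarrow> enc p i \<in> Gs p"
  using enc_bij[of p] by (auto simp: bij_betw_def)

lemma set_lt: "{j. j < n \<and> P j} = {j\<in>{..<n}. P j}" by auto

lemma FF_row:
  assumes "prime p" "odd p" "r < p - 1" "i < 2 * p"
  shows "card {j. j < 2 * p \<and> FF p r i j = 1} = p" "card {j. j < 2 * p \<and> FF p r i j = 0} = p"
proof -
  have p0: "p > 0" using assms(2) by presburger
  have g: "pim p (Suc r) (enc p i) \<in> Gs p" by (rule pim_in[OF p0])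
  have "card {j. j < 2 * p \<and> FF p r i j = 1} = (\<Sum>j<2*p. FF p r i j)"
    unfolding set_lt by (rule card_01[OF finite_lessThan FF_01])
  also have "\<dots> = p" unfolding FF_def by (rule row_sum[OF assms(2) g])
  finally show 1: "card {j. j < 2 * p \<and> FF p r i j = 1} = p" .
  have "card {j\<in>{..<2*p}. FF p r i j = 0} + card {j\<in>{..<2*p}. FF p r i j = 1} = card {..<2*p}"
    by (rule card_00[OF finite_lessThan FF_01])
  then show "card {j. j < 2 * p \<and> FF p r i j = 0} = p" using 1 unfolding set_lt by simp
qed

lemma FF_col:
  assumes "prime p" "odd p" "r < p - 1" "j < 2 * p"
  shows "card {i. i < 2 * p \<and> FF p r i j = 1} = p" "card {i. i < 2 * p \<and> FF p r i j = 0} = p"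
proof -
  have p0: "p > 0" using assms(2) by presburger
  have h: "enc p j \<in> Gs p" by (rule enc_in[OF p0 assms(4)])
  have "card {i. i < 2 * p \<and> FF p r i j = 1} = (\<Sum>i<2*p. FF p r i j)"
    unfolding set_lt by (rule card_01[OF finite_lessThan FF_01])
  also have "\<dots> = p" unfolding FF_def by (rule col_sum[OF assms(1,2) _ _ h]) (use assms(3) in auto)
  finally show 1: "card {i. i < 2 * p \<and> FF p r i j = 1} = p" .
  have "card {i\<in>{..<2*p}. FF p r i j = 0} + card {i\<in>{..<2*p}. FF p r i j = 1} = card {..<2*p}"
    by (rule card_00[OF finite_lessThan FF_01])
  then show "card {i. i < 2 * p \<and> FF p r i j = 0} = p" using 1 unfolding set_lt by simp
qed

lemma FF_bfs: assumes "prime p" "odd p" "r < p - 1" shows "binary_freq_square (2 * p) (FF p r)"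
  unfolding binary_freq_square_def using FF_01 FF_row[OF assms] FF_col[OF assms] by auto

lemma card_pairs: fixes n :: nat shows "card {(i, j). i < n \<and> j < n \<and> P i j} = (\<Sum>i<n. \<Sum>j<n. ind (P i j))"
proof -
  have e: "{(i, j). i < n \<and> j < n \<and> P i j} = Sigma {..<n} (\<lambda>i. {j\<in>{..<n}. P i j})" by auto
  have f: "card (Sigma {..<n} (\<lambda>i. {j\<in>{..<n}. P i j})) = (\<Sum>i<n. card {j\<in>{..<n}. P i j})"
    by (rule card_SigmaI) auto
  have "card {(i, j). i < n \<and> j < n \<and> P i j} = (\<Sum>i<n. card {j\<in>{..<n}. P i j})"
    unfolding e f ..
  also have "\<dots> = (\<Sum>i<n. \<Sum>j<n. ind (P i j))" by (simp add: sum_ind)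
  finally show ?thesis .
qed

lemma four_counts:
  fixes F1 F2 :: "nat \<Rightarrow> nat \<Rightarrow> nat"
  assumes v1: "\<And>i j. F1 i j \<in> {0,1}" and v2: "\<And>i j. F2 i j \<in> {0,1}"
    and s1: "(\<Sum>i<n. \<Sum>j<n. F1 i j) = 2 * q" and s2: "(\<Sum>i<n. \<Sum>j<n. F2 i j) = 2 * q"
    and s12: "(\<Sum>i<n. \<Sum>j<n. F1 i j * F2 i j) = q" and nn: "n * n = 4 * q"
  shows "\<forall>a\<in>{0::nat,1}. \<forall>b\<in>{0::nat,1}. card {(i, j). i < n \<and> j < n \<and> F1 i j = a \<and> F2 i j = b} = q"
proof -
  define T where "T a b = (\<Sum>i<n. \<Sum>j<n. ind (F1 i j = a \<and> F2 i j = b))" for a b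
  have c: "card {(i, j). i < n \<and> j < n \<and> F1 i j = a \<and> F2 i j = b} = T a b" for a b
    unfolding T_def by (rule card_pairs)
  have p11: "ind (F1 i j = 1 \<and> F2 i j = 1) = F1 i j * F2 i j" for i j
    using v1[of i j] v2[of i j] by (auto simp: ind_def)
  have p10: "ind (F1 i j = 1 \<and> F2 i j = 0) + F1 i j * F2 i j = F1 i j" for i j
    using v1[of i j] v2[of i j] by (auto simp: ind_def)
  have p01: "ind (F1 i j = 0 \<and> F2 i j = 1) + F1 i j * F2 i j = F2 i j" for i j
    using v1[of i j] v2[of i j] by (auto simp: ind_def)
  have p00: "ind (F1 i j = 0 \<and> F2 i j = 0) + F1 i j + F2 i j = 1 + F1 i j * F2 i j" for i j
    using v1[of i j] v2[of i j] by (auto simp: ind_def)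
  have t11: "T 1 1 = q" unfolding T_def p11 using s12 .
  have "T 1 0 + q = 2 * q"
  proof -
    have "T 1 0 + q = (\<Sum>i<n. \<Sum>j<n. ind (F1 i j = 1 \<and> F2 i j = 0) + F1 i j * F2 i j)"
      unfolding T_def s12[symmetric] by (simp only: sum.distrib[symmetric])
    also have "\<dots> = 2 * q" unfolding p10 using s1 .
    finally show ?thesis .
  qed
  then have t10: "T 1 0 = q" by simp
  have "T 0 1 + q = 2 * q"
  proof -
    have "T 0 1 + q = (\<Sum>i<n. \<Sum>j<n. ind (F1 i j = 0 \<and> F2 i j = 1) + F1 i j * F2 i j)"
      unfolding T_def s12[symmetric] by (simp only: sum.distrib[symmetric])
    also have "\<dots> = 2 * q" unfolding p01 using s2 .
    finally show ?thesis .
  qed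
  then have t01: "T 0 1 = q" by simp
  have "T 0 0 + 2 * q + 2 * q = n * n + q"
  proof -
    have "T 0 0 + (\<Sum>i<n. \<Sum>j<n. F1 i j) + (\<Sum>i<n. \<Sum>j<n. F2 i j)
        = (\<Sum>i<n. \<Sum>j<n. ind (F1 i j = 0 \<and> F2 i j = 0) + F1 i j + F2 i j)"
      unfolding T_def by (simp only: sum.distrib[symmetric])
    then have "T 0 0 + 2 * q + 2 * q = (\<Sum>i<n. \<Sum>j<n. ind (F1 i j = 0 \<and> F2 i j = 0) + F1 i j + F2 i j)"
      unfolding s1 s2 .
    also have "\<dots> = (\<Sum>i<n. \<Sum>j<n. 1 + F1 i j * F2 i j)" unfolding p00 ..
    also have "\<dots> = n * n + q" unfolding s12[symmetric] sum.distrib by simp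
    finally show ?thesis .
  qed
  then have t00: "T 0 0 = q" using nn by simp
  show ?thesis using c t11 t10 t01 t00 by auto
qed

lemma FF_sum: assumes "prime p" "odd p" "r < p - 1"
  shows "(\<Sum>i<2*p. \<Sum>j<2*p. FF p r i j) = 2 * (p * p)"
proof -
  have p0: "p > 0" using assms(2) by presburger
  have "(\<Sum>i<2*p. \<Sum>j<2*p. FF p r i j) = (\<Sum>i<2*p. p)"
    unfolding FF_def by (intro sum.cong refl row_sum[OF assms(2) pim_in[OF p0]])
  then show ?thesis by simp
qed

lemma FF_prod_sum: assumes "prime p" "odd p" "r < p - 1" "s < p - 1" "r \<noteq> s"
  shows "(\<Sum>i<2*p. \<Sum>j<2*p. FF p r i j * FF p s i j) = p * p"
proof -
  have p0: "p > 0" using assms(2) by presburger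
  define \<Phi> where "\<Phi> g = (\<Sum>h\<in>Gs p. inS p (gadd p (pim p (Suc r) g) h) * inS p (gadd p (pim p (Suc s) g) h))" for g
  have "(\<Sum>i<2*p. \<Sum>j<2*p. FF p r i j * FF p s i j) = (\<Sum>i<2*p. \<Phi> (enc p i))"
    unfolding FF_def \<Phi>_def by (intro sum.cong refl sum_enc[OF p0])
  also have "\<dots> = (\<Sum>g\<in>Gs p. \<Phi> g)" by (rule sum_enc[OF p0])
  also have "\<dots> = (\<Sum>g\<in>Gs p. rho p (Dm p (Suc r) (Suc s) g))"
    unfolding \<Phi>_def Dm_def by (intro sum.cong refl pair_sum[OF p0 pim_in[OF p0]])
  also have "\<dots> = p * p" by (rule main_sum) (use assms in auto)
  finally show ?thesis .
qed

theorem mainTheorem14: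
  fixes p :: nat
  assumes "prime p" and "p \<ge> 3"
  shows "\<exists>F. MOFS_binary (2 * p) (p - 1) F"
proof -
  have odd: "odd p" using prime_odd_nat[OF assms(1)] assms(2) by auto
  have nn: "2 * p * (2 * p) = 4 * (p * p)" by simp
  have sq: "(2 * p)\<^sup>2 div 4 = p * p" by (simp add: power2_eq_square)
  have "MOFS_binary (2 * p) (p - 1) (FF p)"
    unfolding MOFS_binary_def
  proof (intro conjI allI impI)
    fix r assume "r < p - 1"
    then show "binary_freq_square (2 * p) (FF p r)" by (rule FF_bfs[OF assms(1) odd])
  next
    fix r s assume r: "r < p - 1" and s: "s < p - 1" and rs: "r \<noteq> s"
    have cnt: "\<forall>a\<in>{0::nat,1}. \<forall>b\<in>{0::nat,1}.
      card {(i, j). i < 2 * p \<and> j < 2 * p \<and> FF p r i j = a \<and> FF p s i j = b} = p * p"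
      by (rule four_counts[OF FF_01 FF_01 FF_sum[OF assms(1) odd r] FF_sum[OF assms(1) odd s]
            FF_prod_sum[OF assms(1) odd r s rs] nn])
    then show "orthogonal_squares (2 * p) (FF p r) (FF p s)"
      unfolding orthogonal_squares_def sq by simp
    have "card {(i, j). i < 2 * p \<and> j < 2 * p \<and> FF p r i j = 1 \<and> FF p s i j = 0} = p * p"
      using cnt by simp
    moreover have "p * p > 0" using assms(2) by simp
    ultimately have "{(i, j). i < 2 * p \<and> j < 2 * p \<and> FF p r i j = 1 \<and> FF p s i j = 0} \<noteq> {}"
      by (metis card.empty less_irrefl)
    then obtain i j where ij: "i < 2 * p" "j < 2 * p" "FF p r i j = 1" "FF p s i j = 0" by blast
    then have "FF p r i j \<noteq> FF p s i j" by simp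
    then show "\<exists>i<2 * p. \<exists>j<2 * p. FF p r i j \<noteq> FF p s i j" using ij(1,2) by blast
  qed
  then show ?thesis by blast
qed

end
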